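(* Let $n\ge1$, $\mathbb{R}^n_+=\{x\in\mathbb{R}^n:x_1>0\}$ and let $k\in\{1,\ldots,n\}$. Then for every $u\in C_0^\infty(\mathbb{R}^n_+)$, \[ \int_{\mathbb{R}^n_+}|\nabla u|^2dx\ \ge\ \int_{\mathbb{R}^n_+}\left(\frac{k^2}{4}\,\frac{1}{x_1^2+\cdots+x_k^2}+\sum_{m=k+1}^{n}\frac14\,\frac{1}{x_1^2+\cdots+x_m^2}\right)u^2dx, \] where the sum is empty when $k=n$. *)

theory Defs
  imports "HOL-Analysis.Analysis"
begin

text \<open>Points of R^n are modelled as vectors real^'n, where the index type 'n is finite
  and linearly ordered; its elements listed in increasing order are the coordinates 1..n
  (so n = CARD('n)).  coord x m is the m-th coordinate x_m (1-based).\<close>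

definition coord :: "real ^ ('n::{finite,linorder}) \<Rightarrow> nat \<Rightarrow> real" where
  "coord x m = x $ (sorted_list_of_set (UNIV :: 'n set) ! (m - 1))"

definition half_space :: "(real ^ ('n::{finite,linorder})) set" where
  "half_space = {x. coord x 1 > 0}"

definition partial :: "'n::finite \<Rightarrow> (real ^ 'n \<Rightarrow> real) \<Rightarrow> real ^ 'n \<Rightarrow> real" where
  "partial i f x = frechet_derivative f (at x) (axis i 1)"

fun pderivs :: "'n::finite list \<Rightarrow> (real ^ 'n \<Rightarrow> real) \<Rightarrow> real ^ 'n \<Rightarrow> real" where
  "pderivs [] f = f"
| "pderivs (i # is) f = partial i (pderivs is f)"

definition smooth :: "(real ^ 'n::finite \<Rightarrow> real) \<Rightarrow> bool" where
  "smooth f \<longleftrightarrow> (\<forall>is x. pderivs is f differentiable (at x))"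

text \<open>u \<in> C_0^\<infinity>(\<Omega>): smooth, with compact support contained in \<Omega>
  (identified with its extension by zero to all of R^n).\<close>
definition C0_infty :: "(real ^ 'n::finite) set \<Rightarrow> (real ^ 'n \<Rightarrow> real) set" where
  "C0_infty \<Omega> = {u. smooth u \<and> compact (closure {x. u x \<noteq> 0}) \<and> closure {x. u x \<noteq> 0} \<subseteq> \<Omega>}"

definition grad_sq :: "(real ^ 'n::finite \<Rightarrow> real) \<Rightarrow> real ^ 'n \<Rightarrow> real" where
  "grad_sq u x = (\<Sum>i\<in>UNIV. (partial i u x)^2)"

end

theory Submission
  imports Defs
begin

definition RR :: "(nat \<Rightarrow> real) \<Rightarrow> nat \<Rightarrow> real" where
  "RR xs m = (\<Sum>p<m. (xs p)^2)"

lemma RR_pos: assumes "xs 0 > 0" "m \<ge> 1" shows "RR xs m > 0"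
proof -
  have "(xs 0)^2 \<le> RR xs m" unfolding RR_def
    by (rule member_le_sum) (use assms in auto)
  moreover have "(xs 0)^2 > 0" using assms by simp
  ultimately show ?thesis by linarith
qed

lemma sum_ind: fixes N :: nat assumes "c \<le> N" shows "(\<Sum>q<N. of_bool (q<c) * f q) = (\<Sum>q<c. (f q::real))"
proof -
  have "(\<Sum>q<N. of_bool (q<c) * f q) = (\<Sum>q\<in>{..<c}. of_bool (q<c) * f q)"
    apply (rule sum.mono_neutral_right) using assms by auto
  then show ?thesis by simp
qed

lemma sum_ind0: fixes N :: nat assumes "0 < N" shows "(\<Sum>q<N. of_bool (q=0) * f q) = (f 0::real)"
proof -
  have "(\<Sum>q<N. of_bool (q=0) * f q) = (\<Sum>q\<in>{0}. of_bool (q=0) * f q)"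
    apply (rule sum.mono_neutral_right) using assms by auto
  then show ?thesis by simp
qed

lemma dbl_insert:
  assumes "finite A" "a \<notin> A"
  shows "(\<Sum>m\<in>insert a A. \<Sum>l\<in>insert a A. f m l) =
     f a a + (\<Sum>l\<in>A. f a l) + (\<Sum>m\<in>A. f m a) + (\<Sum>m\<in>A. \<Sum>l\<in>A. (f m l::real))"
  using assms by (simp add: sum.insert sum.distrib)

lemma dbl_sum:
  assumes "xs 0 > 0"
  shows "(\<Sum>m\<in>{k+1..k+d}. \<Sum>l\<in>{k+1..k+d}. RR xs (min m l) / (RR xs m * RR xs l))
       = (\<Sum>m\<in>{k+1..k+d}. (2*(real m - real k) - 1) / RR xs m)"
proof (induction d)
  case 0
  then show ?case by simp
next
  case (Suc d)
  let ?f = "\<lambda>m l. RR xs (min m l) / (RR xs m * RR xs l)"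
  have ins: "{k+1..k+Suc d} = insert (k + Suc d) {k+1..k+d}" by auto
  have pos: "RR xs (k + Suc d) > 0" using RR_pos[of xs, OF assms] by simp
  have posm: "\<And>m. m \<in> {k+1..k+d} \<Longrightarrow> RR xs m > 0" using RR_pos[of xs, OF assms] by simp
  have a1: "(\<Sum>l\<in>{k+1..k+d}. ?f (k + Suc d) l) = (\<Sum>l\<in>{k+1..k+d}. 1 / RR xs (k + Suc d))"
  proof (rule sum.cong)
    fix l assume "l \<in> {k+1..k+d}"
    then have "min (k + Suc d) l = l" "RR xs l > 0" using posm by auto
    then show "?f (k + Suc d) l = 1 / RR xs (k + Suc d)" by auto
  qed auto
  have a2: "(\<Sum>l\<in>{k+1..k+d}. ?f l (k + Suc d)) = (\<Sum>l\<in>{k+1..k+d}. 1 / RR xs (k + Suc d))"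
  proof (rule sum.cong)
    fix l assume "l \<in> {k+1..k+d}"
    then have "min l (k + Suc d) = l" "RR xs l > 0" using posm by auto
    then show "?f l (k + Suc d) = 1 / RR xs (k + Suc d)" by auto
  qed auto
  have a0: "?f (k + Suc d) (k + Suc d) = 1 / RR xs (k + Suc d)" using pos by (simp add: power2_eq_square)
  have "(\<Sum>m\<in>{k+1..k+Suc d}. \<Sum>l\<in>{k+1..k+Suc d}. ?f m l)
     = 1 / RR xs (k + Suc d) + 2 * real d / RR xs (k + Suc d) + (\<Sum>m\<in>{k+1..k+d}. \<Sum>l\<in>{k+1..k+d}. ?f m l)"
  proof -
    have "(\<Sum>m\<in>{k+1..k+Suc d}. \<Sum>l\<in>{k+1..k+Suc d}. ?f m l) = ?f (k + Suc d) (k + Suc d)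
       + (\<Sum>l\<in>{k+1..k+d}. ?f (k + Suc d) l) + (\<Sum>m\<in>{k+1..k+d}. ?f m (k + Suc d))
       + (\<Sum>m\<in>{k+1..k+d}. \<Sum>l\<in>{k+1..k+d}. ?f m l)"
      unfolding ins by (rule dbl_insert) auto
    also have "\<dots> = 1 / RR xs (k + Suc d) + 2 * real d / RR xs (k + Suc d) + (\<Sum>m\<in>{k+1..k+d}. \<Sum>l\<in>{k+1..k+d}. ?f m l)"
      unfolding a0 a1 a2 by simp
    finally show ?thesis .
  qed
  also have "\<dots> = (2*(real (k + Suc d) - real k) - 1) / RR xs (k + Suc d) + (\<Sum>m\<in>{k+1..k+d}. (2*(real m - real k) - 1) / RR xs m)"
    using Suc by (simp add: field_simps add_divide_distrib[symmetric])
  also have "\<dots> = (\<Sum>m\<in>{k+1..k+Suc d}. (2*(real m - real k) - 1) / RR xs m)"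
    unfolding ins by (subst sum.insert) auto
  finally show ?case .
qed

definition Vc :: "nat \<Rightarrow> nat \<Rightarrow> (nat \<Rightarrow> real) \<Rightarrow> nat \<Rightarrow> real" where
  "Vc k N xs q = - (of_bool (q=0) / xs 0) + of_bool (q<k) * (real k / 2) * xs q / RR xs k
     + (\<Sum>m\<in>{k+1..N}. of_bool (q<m) * xs q / (2 * RR xs m))"

definition Dc :: "nat \<Rightarrow> nat \<Rightarrow> (nat \<Rightarrow> real) \<Rightarrow> nat \<Rightarrow> real" where
  "Dc k N xs q = of_bool (q=0) / (xs 0)^2
     + of_bool (q<k) * (real k / 2) * (1 / RR xs k - 2 * (xs q)^2 / (RR xs k)^2)
     + (\<Sum>m\<in>{k+1..N}. of_bool (q<m) * (1 / RR xs m - 2 * (xs q)^2 / (RR xs m)^2) / 2)"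

lemma sum_sq_div: "(\<Sum>q<c. (xs q)^2 / D) = RR xs c / D"
  unfolding RR_def by (simp add: sum_divide_distrib)

lemma sum_sq_mult: "(\<Sum>q<c. a * (xs q)^2) = a * RR xs c"
  unfolding RR_def by (simp add: sum_distrib_left)

lemma div_sum:
  assumes x0: "xs 0 > 0" and k: "1 \<le> k" "k \<le> N"
  shows "(\<Sum>q<N. Dc k N xs q) = 1/(xs 0)^2 + real k / 2 * (real k - 2) / RR xs k
     + (\<Sum>m\<in>{k+1..N}. (real m - 2) / (2 * RR xs m))"
proof -
  have Rk: "RR xs k > 0" using RR_pos[of xs k] x0 k by auto
  have t1: "(\<Sum>q<N. of_bool (q=0) / (xs 0)^2) = 1/(xs 0)^2"
    using sum_ind0[of N "\<lambda>q. 1/(xs 0)^2"] k by simp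
  have t2: "(\<Sum>q<N. of_bool (q<k) * (real k / 2) * (1 / RR xs k - 2 * (xs q)^2 / (RR xs k)^2))
      = real k / 2 * (real k - 2) / RR xs k"
  proof -
    have "(\<Sum>q<N. of_bool (q<k) * (real k / 2) * (1 / RR xs k - 2 * (xs q)^2 / (RR xs k)^2))
       = (\<Sum>q<N. of_bool (q<k) * ((real k / 2) * (1 / RR xs k - 2 * (xs q)^2 / (RR xs k)^2)))"
      by (simp add: mult.assoc)
    also have "\<dots> = (\<Sum>q<k. (real k / 2) * (1 / RR xs k - 2 * (xs q)^2 / (RR xs k)^2))"
      by (rule sum_ind) (use k in auto)
    also have "\<dots> = (\<Sum>q<k. (real k/2)/RR xs k - (real k / (RR xs k)^2) * (xs q)^2)"
      by (rule sum.cong) (auto simp: field_simps)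
    also have "\<dots> = real k * ((real k/2)/RR xs k) - (real k / (RR xs k)^2) * RR xs k"
      by (simp only: sum_subtractf sum_sq_mult) simp
    also have "\<dots> = real k / 2 * (real k - 2) / RR xs k"
      using Rk by (simp add: power2_eq_square field_simps)
    finally show ?thesis .
  qed
  have t3: "(\<Sum>q<N. \<Sum>m\<in>{k+1..N}. of_bool (q<m) * (1 / RR xs m - 2 * (xs q)^2 / (RR xs m)^2) / 2)
     = (\<Sum>m\<in>{k+1..N}. (real m - 2) / (2 * RR xs m))"
  proof -
    have "(\<Sum>q<N. \<Sum>m\<in>{k+1..N}. of_bool (q<m) * (1 / RR xs m - 2 * (xs q)^2 / (RR xs m)^2) / 2)
      = (\<Sum>m\<in>{k+1..N}. \<Sum>q<N. of_bool (q<m) * ((1 / RR xs m - 2 * (xs q)^2 / (RR xs m)^2) / 2))"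
      by (subst sum.swap) simp
    also have "\<dots> = (\<Sum>m\<in>{k+1..N}. \<Sum>q<m. ((1 / RR xs m - 2 * (xs q)^2 / (RR xs m)^2) / 2))"
      by (rule sum.cong[OF refl], rule sum_ind) auto
    also have "\<dots> = (\<Sum>m\<in>{k+1..N}. (real m - 2) / (2 * RR xs m))"
    proof (rule sum.cong)
      fix m assume m: "m \<in> {k+1..N}"
      have Rm: "RR xs m > 0" using RR_pos[of xs m] x0 m by auto
      have "(\<Sum>q<m. ((1 / RR xs m - 2 * (xs q)^2 / (RR xs m)^2) / 2))
          = (\<Sum>q<m. 1 / (2 * RR xs m) - (1 / (RR xs m)^2) * (xs q)^2)"
        by (rule sum.cong) (auto simp: field_simps)
      also have "\<dots> = real m * (1 / (2 * RR xs m)) - (1 / (RR xs m)^2) * RR xs m"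
        by (simp only: sum_subtractf sum_sq_mult) simp
      also have "\<dots> = (real m - 2) / (2 * RR xs m)"
        using Rm by (simp add: power2_eq_square field_simps)
      finally show "(\<Sum>q<m. ((1 / RR xs m - 2 * (xs q)^2 / (RR xs m)^2) / 2)) = (real m - 2) / (2 * RR xs m)" .
    qed simp
    finally show ?thesis .
  qed
  show ?thesis unfolding Dc_def sum.distrib t1 t2 t3 ..
qed

lemma vsq:
  assumes x0: "xs 0 > 0" and k: "1 \<le> k" "k \<le> N"
  shows "(\<Sum>q<N. (Vc k N xs q)^2) = 1/(xs 0)^2 + (real k)^2 / (4 * RR xs k) - real k / RR xs k
     + (\<Sum>m\<in>{k+1..N}. (2*(real m - real k) - 1) / (4 * RR xs m) - 1 / RR xs m + real k / (2 * RR xs m))"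
proof -
  define R where "R = RR xs"
  have Rk: "R k > 0" using RR_pos[of xs k] x0 k by (auto simp: R_def)
  have Rm: "\<And>m. m \<in> {k+1..N} \<Longrightarrow> R m > 0" using RR_pos[of xs] x0 k by (auto simp: R_def)
  define A where "A q = - (of_bool (q=0) / xs 0)" for q :: nat
  define B where "B (q::nat) = of_bool (q<k) * (real k / 2) * xs q / R k" for q
  define C where "C (q::nat) = (\<Sum>m\<in>{k+1..N}. of_bool (q<m) * xs q / (2 * R m))" for q
  have V: "Vc k N xs q = A q + B q + C q" for q unfolding Vc_def A_def B_def C_def R_def by simp
  have exp: "(A q + B q + C q)^2 = (A q)^2 + (B q)^2 + (C q)^2 + 2 * (A q * B q) + 2 * (A q * C q) + 2 * (B q * C q)" for q
    by (simp add: power2_eq_square algebra_simps)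
  have sA: "(\<Sum>q<N. (A q)^2) = 1/(xs 0)^2"
  proof -
    have "(\<Sum>q<N. (A q)^2) = (\<Sum>q<N. of_bool (q=0) * (1/(xs 0)^2))"
      by (rule sum.cong) (auto simp: A_def power2_eq_square)
    also have "\<dots> = 1/(xs 0)^2" by (rule sum_ind0) (use k in auto)
    finally show ?thesis .
  qed
  have sB: "(\<Sum>q<N. (B q)^2) = (real k)^2 / (4 * R k)"
  proof -
    have "(\<Sum>q<N. (B q)^2) = (\<Sum>q<N. of_bool (q<k) * ((real k)^2 / (4 * (R k)^2) * (xs q)^2))"
      by (rule sum.cong) (auto simp: B_def power2_eq_square)
    also have "\<dots> = (\<Sum>q<k. (real k)^2 / (4 * (R k)^2) * (xs q)^2)" by (rule sum_ind) (use k in auto)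
    also have "\<dots> = (real k)^2 / (4 * (R k)^2) * R k" unfolding R_def by (rule sum_sq_mult)
    also have "\<dots> = (real k)^2 / (4 * R k)" using Rk by (simp add: power2_eq_square)
    finally show ?thesis .
  qed
  have sAB: "(\<Sum>q<N. A q * B q) = - real k / (2 * R k)"
  proof -
    have "(\<Sum>q<N. A q * B q) = (\<Sum>q<N. of_bool (q=0) * (- real k / (2 * R k)))"
      by (rule sum.cong) (use x0 k in \<open>auto simp: A_def B_def\<close>)
    also have "\<dots> = - real k / (2 * R k)" by (rule sum_ind0) (use k in auto)
    finally show ?thesis .
  qed
  have sAC: "(\<Sum>q<N. A q * C q) = - (\<Sum>m\<in>{k+1..N}. 1 / (2 * R m))"
  proof -
    have "(\<Sum>q<N. A q * C q) = (\<Sum>q<N. of_bool (q=0) * (- (\<Sum>m\<in>{k+1..N}. 1 / (2 * R m))))"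
    proof (rule sum.cong)
      fix q assume "q \<in> {..<N}"
      show "A q * C q = of_bool (q=0) * (- (\<Sum>m\<in>{k+1..N}. 1 / (2 * R m)))"
      proof (cases "q = 0")
        case True
        have "C 0 = (\<Sum>m\<in>{k+1..N}. xs 0 / (2 * R m))" unfolding C_def
          by (rule sum.cong) auto
        then have "C 0 = xs 0 * (\<Sum>m\<in>{k+1..N}. 1 / (2 * R m))" by (simp add: sum_distrib_left)
        then show ?thesis using True x0 by (simp add: A_def)
      qed (simp add: A_def)
    qed simp
    also have "\<dots> = - (\<Sum>m\<in>{k+1..N}. 1 / (2 * R m))" by (rule sum_ind0) (use k in auto)
    finally show ?thesis .
  qed
  have sBC: "(\<Sum>q<N. B q * C q) = (\<Sum>m\<in>{k+1..N}. real k / (4 * R m))"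
  proof -
    have "(\<Sum>q<N. B q * C q) = (\<Sum>q<N. \<Sum>m\<in>{k+1..N}. of_bool (q<k) * (real k / (4 * R k * R m) * (xs q)^2))"
      unfolding B_def C_def sum_distrib_left
      by (rule sum.cong[OF refl], rule sum.cong[OF refl]) (auto simp: power2_eq_square)
    also have "\<dots> = (\<Sum>m\<in>{k+1..N}. \<Sum>q<N. of_bool (q<k) * (real k / (4 * R k * R m) * (xs q)^2))"
      by (rule sum.swap)
    also have "\<dots> = (\<Sum>m\<in>{k+1..N}. \<Sum>q<k. real k / (4 * R k * R m) * (xs q)^2)"
      by (rule sum.cong[OF refl], rule sum_ind) (use k in auto)
    also have "\<dots> = (\<Sum>m\<in>{k+1..N}. real k / (4 * R k * R m) * R k)"
      unfolding R_def sum_sq_mult ..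
    also have "\<dots> = (\<Sum>m\<in>{k+1..N}. real k / (4 * R m))"
      by (rule sum.cong) (use Rk in auto)
    finally show ?thesis .
  qed
  have sC: "(\<Sum>q<N. (C q)^2) = (\<Sum>m\<in>{k+1..N}. (2*(real m - real k) - 1) / (4 * R m))"
  proof -
    have "(\<Sum>q<N. (C q)^2) = (\<Sum>q<N. \<Sum>m\<in>{k+1..N}. \<Sum>l\<in>{k+1..N}.
            of_bool (q < min m l) * (1 / (4 * R m * R l) * (xs q)^2))"
      unfolding C_def power2_eq_square sum_product
      by (rule sum.cong[OF refl], rule sum.cong[OF refl], rule sum.cong[OF refl]) (auto simp: power2_eq_square)
    also have "\<dots> = (\<Sum>m\<in>{k+1..N}. \<Sum>l\<in>{k+1..N}. \<Sum>q<N.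
            of_bool (q < min m l) * (1 / (4 * R m * R l) * (xs q)^2))"
      by (subst sum.swap, rule sum.cong[OF refl], rule sum.swap)
    also have "\<dots> = (\<Sum>m\<in>{k+1..N}. \<Sum>l\<in>{k+1..N}. \<Sum>q<min m l. 1 / (4 * R m * R l) * (xs q)^2)"
      by (rule sum.cong[OF refl], rule sum.cong[OF refl], rule sum_ind) auto
    also have "\<dots> = (\<Sum>m\<in>{k+1..N}. \<Sum>l\<in>{k+1..N}. (1/4) * (R (min m l) / (R m * R l)))"
      unfolding R_def sum_sq_mult by (simp add: mult.assoc)
    also have "\<dots> = (1/4) * (\<Sum>m\<in>{k+1..k+(N-k)}. \<Sum>l\<in>{k+1..k+(N-k)}. RR xs (min m l) / (RR xs m * RR xs l))"
      using k by (simp add: sum_distrib_left R_def ac_simps)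
    also have "\<dots> = (1/4) * (\<Sum>m\<in>{k+1..k+(N-k)}. (2*(real m - real k) - 1) / RR xs m)"
      by (simp only: dbl_sum[of xs k "N-k", OF x0])
    also have "\<dots> = (\<Sum>m\<in>{k+1..N}. (2*(real m - real k) - 1) / (4 * R m))"
      using k by (simp add: sum_distrib_left R_def)
    finally show ?thesis .
  qed
  have "(\<Sum>q<N. (Vc k N xs q)^2) = (\<Sum>q<N. (A q)^2) + (\<Sum>q<N. (B q)^2) + (\<Sum>q<N. (C q)^2)
      + 2 * (\<Sum>q<N. A q * B q) + 2 * (\<Sum>q<N. A q * C q) + 2 * (\<Sum>q<N. B q * C q)"
    unfolding V exp by (simp add: sum.distrib sum_distrib_left)
  also have "\<dots> = 1/(xs 0)^2 + (real k)^2 / (4 * R k) - real k / R k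
     + (\<Sum>m\<in>{k+1..N}. (2*(real m - real k) - 1) / (4 * R m) - 1 / R m + real k / (2 * R m))"
    unfolding sA sB sC sAB sAC sBC
    by (simp add: sum.distrib sum_subtractf sum_distrib_left field_simps)
  finally show ?thesis unfolding R_def .
qed

lemma weight_eq:
  assumes x0: "xs 0 > 0" and k: "1 \<le> k" "k \<le> N"
  shows "(\<Sum>q<N. Dc k N xs q) - (\<Sum>q<N. (Vc k N xs q)^2)
     = (real k)^2 / 4 * (1 / RR xs k) + (\<Sum>m\<in>{k+1..N}. 1/4 * (1 / RR xs m))"
proof -
  have Rk: "RR xs k > 0" using RR_pos[of xs k] x0 k by auto
  have Rm: "\<And>m. m \<in> {k+1..N} \<Longrightarrow> RR xs m > 0" using RR_pos[of xs] x0 k by auto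
  have s: "(\<Sum>m\<in>{k+1..N}. (real m - 2) / (2 * RR xs m)) -
     (\<Sum>m\<in>{k+1..N}. (2*(real m - real k) - 1) / (4 * RR xs m) - 1 / RR xs m + real k / (2 * RR xs m))
     = (\<Sum>m\<in>{k+1..N}. 1/4 * (1 / RR xs m))"
    unfolding sum_subtractf[symmetric]
  proof (rule sum.cong)
    fix m assume "m \<in> {k+1..N}"
    then have "RR xs m > 0" using Rm by auto
    then show "(real m - 2) / (2 * RR xs m) - ((2*(real m - real k) - 1) / (4 * RR xs m) - 1 / RR xs m + real k / (2 * RR xs m)) = 1/4 * (1 / RR xs m)"
      by (simp add: field_simps)
  qed simp
  show ?thesis unfolding div_sum[of xs, OF assms] vsq[of xs, OF assms]
    using s Rk by (simp add: field_simps power2_eq_square)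
qed

lemma RR_shift:
  "RR (\<lambda>p. xs p + t * of_bool (p = q)) m = RR xs m + of_bool (q<m) * (2*t*xs q + t^2)"
proof -
  have "RR (\<lambda>p. xs p + t * of_bool (p = q)) m = (\<Sum>p<m. (xs p)^2 + (if p = q then 2*t*xs q + t^2 else 0))"
    unfolding RR_def by (rule sum.cong) (auto simp: power2_eq_square algebra_simps)
  also have "\<dots> = RR xs m + of_bool (q<m) * (2*t*xs q + t^2)"
    by (simp add: sum.distrib RR_def)
  finally show ?thesis .
qed

lemma deriv_frac:
  assumes "R > 0"
  shows "((\<lambda>t. (c+t)/(R + b*(2*t*c + t^2))) has_real_derivative (1/R - b*2*c^2/R^2)) (at 0)"
  using assms by (auto intro!: derivative_eq_intros simp: field_simps power2_eq_square)

lemma deriv_Vc: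
  assumes x0: "xs 0 > 0" and k: "1 \<le> k" "k \<le> N" and q: "q < N"
  shows "((\<lambda>t. Vc k N (\<lambda>p. xs p + t * of_bool (p = q)) q) has_real_derivative Dc k N xs q) (at 0)"
proof -
  have Rk: "RR xs k > 0" using RR_pos[of xs k] x0 k by auto
  have Rm: "\<And>m. m \<in> {k+1..N} \<Longrightarrow> RR xs m > 0" using RR_pos[of xs] x0 k by auto
  define T1 where "T1 t = - (of_bool (q=0) / (xs 0 + t * of_bool (0 = q)))" for t :: real
  define f where "f R b t = (xs q + t)/(R + b*(2*t*xs q + t^2))" for R b t :: real
  define T2 where "T2 t = of_bool (q<k) * (real k / 2) * f (RR xs k) (of_bool (q<k)) t" for t
  define T3 where "T3 t = (\<Sum>m\<in>{k+1..N}. of_bool (q<m) / 2 * f (RR xs m) (of_bool (q<m)) t)" for t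
  have eq: "(\<lambda>t. Vc k N (\<lambda>p. xs p + t * of_bool (p = q)) q) = (\<lambda>t. T1 t + T2 t + T3 t)"
    by (rule ext) (simp add: Vc_def RR_shift T1_def T2_def T3_def f_def mult.assoc)
  have d1: "(T1 has_real_derivative of_bool (q=0) / (xs 0)^2) (at 0)"
  proof (cases "q = 0")
    case True
    have "((\<lambda>t. - (1 / (xs 0 + t))) has_real_derivative 1 / (xs 0)^2) (at 0)"
      using x0 by (auto intro!: derivative_eq_intros simp: field_simps power2_eq_square)
    then show ?thesis using True by (simp add: T1_def[abs_def])
  next
    case False
    then show ?thesis by (simp add: T1_def[abs_def])
  qed
  have d2: "(T2 has_real_derivative of_bool (q<k) * (real k / 2) * (1 / RR xs k - 2 * (xs q)^2 / (RR xs k)^2)) (at 0)"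
  proof -
    have "(T2 has_real_derivative of_bool (q<k) * (real k / 2) * (1/RR xs k - of_bool (q<k)*2*(xs q)^2/(RR xs k)^2)) (at 0)"
      unfolding T2_def[abs_def] f_def
      by (rule DERIV_cmult deriv_frac Rk)+
    then show ?thesis by (cases "q < k") auto
  qed
  have d3: "(T3 has_real_derivative (\<Sum>m\<in>{k+1..N}. of_bool (q<m) * (1 / RR xs m - 2 * (xs q)^2 / (RR xs m)^2) / 2)) (at 0)"
  proof -
    have "(T3 has_real_derivative (\<Sum>m\<in>{k+1..N}. of_bool (q<m) / 2 * (1/RR xs m - of_bool (q<m)*2*(xs q)^2/(RR xs m)^2))) (at 0)"
      unfolding T3_def[abs_def] f_def
      by (rule DERIV_sum, rule DERIV_cmult, rule deriv_frac, rule Rm)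
    moreover have "(\<Sum>m\<in>{k+1..N}. of_bool (q<m) / 2 * (1/RR xs m - of_bool (q<m)*2*(xs q)^2/(RR xs m)^2))
       = (\<Sum>m\<in>{k+1..N}. of_bool (q<m) * (1 / RR xs m - 2 * (xs q)^2 / (RR xs m)^2) / 2)"
      by (rule sum.cong) auto
    ultimately show ?thesis by simp
  qed
  show ?thesis unfolding eq Dc_def
    by (rule DERIV_add[OF DERIV_add[OF d1 d2] d3])
qed

lemma line_deriv:
  fixes f :: "real ^ 'n::finite \<Rightarrow> real"
  assumes "f differentiable (at (x + t0 *\<^sub>R v))"
  shows "((\<lambda>t. f (x + t *\<^sub>R v)) has_real_derivative frechet_derivative f (at (x + t0 *\<^sub>R v)) v) (at t0)"
proof -
  let ?F = "frechet_derivative f (at (x + t0 *\<^sub>R v))"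
  have F: "(f has_derivative ?F) (at (x + t0 *\<^sub>R v))" using assms frechet_derivative_works by blast
  have lin: "linear ?F" using F has_derivative_linear by blast
  have g: "((\<lambda>t. x + t *\<^sub>R v) has_derivative (\<lambda>t. t *\<^sub>R v)) (at t0)"
    by (auto intro!: derivative_eq_intros)
  have "((\<lambda>t. f (x + t *\<^sub>R v)) has_derivative (\<lambda>t. ?F (t *\<^sub>R v))) (at t0)"
    using diff_chain_at[OF g F] by (simp add: o_def)
  moreover have "(\<lambda>t. ?F (t *\<^sub>R v)) = (*) (?F v)"
    using linear_scale[OF lin] by (auto simp: fun_eq_iff mult.commute)
  ultimately show ?thesis unfolding has_field_derivative_def by (simp only:)
qed

lemma partial_line:
  fixes f :: "real ^ 'n::finite \<Rightarrow> real"
  assumes "f differentiable (at x)" "((\<lambda>t. f (x + t *\<^sub>R axis i 1)) has_real_derivative D) (at 0)"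
  shows "partial i f x = D"
proof -
  have "((\<lambda>t. f (x + t *\<^sub>R axis i 1)) has_real_derivative partial i f x) (at 0)"
    using line_deriv[of f x 0 "axis i 1"] assms(1) unfolding partial_def by simp
  then show ?thesis using assms(2) DERIV_unique by blast
qed

lemma partial_mult:
  fixes f g :: "real ^ 'n::finite \<Rightarrow> real"
  assumes "f differentiable (at x)" "g differentiable (at x)"
  shows "partial i (\<lambda>y. f y * g y) x = partial i f x * g x + f x * partial i g x"
proof -
  have F: "(f has_derivative frechet_derivative f (at x)) (at x)"
    and G: "(g has_derivative frechet_derivative g (at x)) (at x)"
    using assms frechet_derivative_works by blast+
  have "((\<lambda>y. f y * g y) has_derivative (\<lambda>h. f x * frechet_derivative g (at x) h + frechet_derivative f (at x) h * g x)) (at x)"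
    by (rule has_derivative_mult[OF F G])
  then have "frechet_derivative (\<lambda>y. f y * g y) (at x) = (\<lambda>h. f x * frechet_derivative g (at x) h + frechet_derivative f (at x) h * g x)"
    by (rule frechet_derivative_at[symmetric])
  then show ?thesis unfolding partial_def by simp
qed

lemma partial_zero:
  fixes f :: "real ^ 'n::finite \<Rightarrow> real"
  assumes "open T" "x \<in> T" "\<And>y. y \<in> T \<Longrightarrow> f y = 0"
  shows "partial i f x = 0" "f differentiable (at x)"
proof -
  have "((\<lambda>y. 0::real) has_derivative (\<lambda>h. 0)) (at x)" by simp
  then have D: "(f has_derivative (\<lambda>h. 0)) (at x)"
    by (rule has_derivative_transform_within_open[OF _ assms(1,2)]) (use assms(3) in auto)
  then show "partial i f x = 0" unfolding partial_def frechet_derivative_at[OF D, symmetric] by simp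
  show "f differentiable (at x)" using D differentiable_def by blast
qed

lemma partial_local:
  fixes f g :: "real ^ 'n::finite \<Rightarrow> real"
  assumes "open T" "x \<in> T" "\<And>y. y \<in> T \<Longrightarrow> f y = g y" "g differentiable (at x)"
  shows "partial i f x = partial i g x" "f differentiable (at x)"
proof -
  have G: "(g has_derivative frechet_derivative g (at x)) (at x)" using assms(4) frechet_derivative_works by blast
  then have D: "(f has_derivative frechet_derivative g (at x)) (at x)"
    by (rule has_derivative_transform_within_open[OF _ assms(1,2)]) (use assms(3) in auto)
  then show "partial i f x = partial i g x" unfolding partial_def using frechet_derivative_at[OF D] by simp
  show "f differentiable (at x)" using D differentiable_def by blast
qed

definition en :: "nat \<Rightarrow> 'n::{finite,linorder}" where
  "en q = sorted_list_of_set (UNIV::'n set) ! q"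

lemma en_bij: "bij_betw (en :: nat \<Rightarrow> 'n::{finite,linorder}) {..<CARD('n)} UNIV"
  unfolding en_def[abs_def]
  by (rule bij_betw_nth) auto

lemma en_inj: "p < CARD('n) \<Longrightarrow> q < CARD('n) \<Longrightarrow> (en p = (en q :: 'n::{finite,linorder})) = (p = q)"
  using en_bij[where 'n='n] unfolding bij_betw_def inj_on_def by auto

lemma sum_en: "(\<Sum>i\<in>UNIV. f i) = (\<Sum>q<CARD('n::{finite,linorder}). f (en q :: 'n))"
  using sum.reindex_bij_betw[OF en_bij, of f] by simp

lemma coord_en: "coord x m = x $ en (m - 1)"
  unfolding coord_def en_def ..

lemma diff_cont:
  fixes g :: "real ^ 'n::finite \<Rightarrow> real"
  assumes "\<And>x. g differentiable (at x)"
  shows "continuous_on S g"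
  by (rule continuous_at_imp_continuous_on) (use assms differentiable_imp_continuous_within in blast)

lemma ibp:
  fixes g :: "real ^ 'n::finite \<Rightarrow> real"
  assumes dg: "\<And>x. g differentiable (at x)"
    and cg: "continuous_on UNIV (partial i g)"
    and K: "compact K" and z: "\<And>x. x \<notin> K \<Longrightarrow> g x = 0"
  shows "(partial i g has_integral 0) UNIV"
proof -
  define e where "e = axis i (1::real)"
  have ne: "norm e = 1" unfolding e_def by (rule norm_axis_1)
  have cont_g: "continuous_on S g" for S using diff_cont[OF dg] .
  obtain \<rho> where \<rho>: "\<rho> > 0" "K \<subseteq> ball 0 \<rho>"
    using bounded_subset_ballD[OF compact_imp_bounded[OF K], of 0] by blast
  obtain a where a: "cball (0::real^'n) (\<rho>+1) \<subseteq> cbox (-a) a"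
    using bounded_subset_cbox_symmetric[OF bounded_cball] by blast
  define B where "B = cbox (-a) a"
  have KB: "K \<subseteq> B"
  proof
    fix y assume "y \<in> K"
    then have "norm y < \<rho>" using \<rho> by auto
    then have "y \<in> cball 0 (\<rho>+1)" by auto
    then show "y \<in> B" using a B_def by auto
  qed
  have zs: "g (y + t *\<^sub>R e) = 0" if "\<bar>t\<bar> \<le> 1" "y \<notin> B" for t y
  proof (rule ccontr)
    assume "g (y + t *\<^sub>R e) \<noteq> 0"
    then have "y + t *\<^sub>R e \<in> K" using z by blast
    then have "norm (y + t *\<^sub>R e) < \<rho>" using \<rho> by auto
    moreover have "norm y \<le> norm (y + t *\<^sub>R e) + norm (t *\<^sub>R e)"
      by (metis add_diff_cancel_right' norm_triangle_ineq4)
    moreover have "norm (t *\<^sub>R e) \<le> 1" using that ne by simp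
    ultimately have "y \<in> cball 0 (\<rho>+1)" by auto
    then show False using that a B_def by auto
  qed
  define I where "I = integral B g"
  have gB: "(g has_integral I) B" unfolding I_def B_def
    by (rule integrable_integral, rule integrable_continuous, rule cont_g)
  have shiftI: "integral B (\<lambda>y. g (y + t *\<^sub>R e)) = I" if t: "\<bar>t\<bar> \<le> 1" for t
  proof -
    define c where "c = t *\<^sub>R e"
    have "((\<lambda>y. g (1 *\<^sub>R y + c)) has_integral (I /\<^sub>R 1 ^ DIM(real^'n))) (cbox ((-a - c) /\<^sub>R 1) ((a - c) /\<^sub>R 1))"
      by (rule has_integral_affinity'[OF gB[unfolded B_def]]) simp
    then have h1: "((\<lambda>y. g (y + c)) has_integral I) (cbox (-a - c) (a - c))" by simp
    have mem: "y \<in> cbox (-a - c) (a - c) \<longleftrightarrow> y + c \<in> cbox (-a) a" for y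
      by (auto simp: mem_box inner_diff_left inner_add_left algebra_simps)
    have h2: "((\<lambda>y. g (y + c)) has_integral I) UNIV"
      by (rule has_integral_on_superset[OF h1]) (use mem KB z B_def in auto)
    have h3: "((\<lambda>y. g (y + c)) has_integral integral B (\<lambda>y. g (y + c))) B"
      unfolding B_def
      by (rule integrable_integral, rule integrable_continuous,
          rule continuous_on_compose2[OF cont_g[of UNIV]]) (auto intro!: continuous_intros)
    have h4: "((\<lambda>y. g (y + c)) has_integral integral B (\<lambda>y. g (y + c))) UNIV"
      by (rule has_integral_on_superset[OF h3]) (use zs t c_def in auto)
    show ?thesis using has_integral_unique[OF h2 h4] c_def by simp
  qed
  define U where "U = {-1<..<1::real}"
  have U: "open U" "convex U" "0 \<in> U" unfolding U_def by auto
  have L: "((\<lambda>s. integral (cbox (-a) a) (\<lambda>y. g (y + s *\<^sub>R e))) has_field_derivative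
      integral (cbox (-a) a) (\<lambda>y. partial i g (y + 0 *\<^sub>R e))) (at 0 within U)"
  proof (rule leibniz_rule_field_derivative[where f="\<lambda>s y. g (y + s *\<^sub>R e)" and fx="\<lambda>s y. partial i g (y + s *\<^sub>R e)"])
    fix s y assume "s \<in> U" "y \<in> cbox (-a) a"
    show "((\<lambda>s. g (y + s *\<^sub>R e)) has_field_derivative partial i g (y + s *\<^sub>R e)) (at s within U)"
      using line_deriv[of g y s e] dg unfolding partial_def e_def
      by (auto intro: has_field_derivative_at_within)
  next
    fix s assume "s \<in> U"
    show "(\<lambda>y. g (y + s *\<^sub>R e)) integrable_on cbox (-a) a"
      by (rule integrable_continuous, rule continuous_on_compose2[OF cont_g[of UNIV]]) (auto intro!: continuous_intros)
  next
    have "continuous_on (U \<times> cbox (-a) a) (\<lambda>p. partial i g (snd p + fst p *\<^sub>R e))"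
      by (rule continuous_on_compose2[OF cg]) (auto intro!: continuous_intros)
    then show "continuous_on (U \<times> cbox (-a) a) (\<lambda>(s, y). partial i g (y + s *\<^sub>R e))"
      by (simp add: case_prod_beta)
  qed (use U in auto)
  then have L': "((\<lambda>s. integral B (\<lambda>y. g (y + s *\<^sub>R e))) has_field_derivative integral B (partial i g)) (at 0)"
    using at_within_open[OF U(3,1)] B_def by simp
  have "((\<lambda>s. integral B (\<lambda>y. g (y + s *\<^sub>R e))) has_field_derivative 0) (at 0)"
    by (rule has_field_derivative_transform_within_open[OF DERIV_const U(1,3)])
       (use shiftI U_def in auto)
  then have int0: "integral B (partial i g) = 0" using DERIV_unique L' by blast
  have pz: "partial i g x = 0" if "x \<notin> K" for x
    by (rule partial_zero[of "-K"]) (use that K compact_imp_closed z in auto)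
  have "(partial i g has_integral 0) B"
    using int0 integrable_integral[OF integrable_continuous[OF continuous_on_subset[OF cg]]] B_def
    by (metis subset_UNIV)
  then show ?thesis
    by (rule has_integral_on_superset) (use pz KB in auto)
qed

lemma RR_cong: "(\<And>p. p < m \<Longrightarrow> xs p = ys p) \<Longrightarrow> RR xs m = RR ys m"
  unfolding RR_def by (rule sum.cong) auto

lemma Vc_cong:
  assumes "\<And>p. p < N \<Longrightarrow> xs p = ys p" "k \<le> N" "q < N"
  shows "Vc k N xs q = Vc k N ys q"
proof -
  have "RR xs m = RR ys m" if "m \<le> N" for m by (rule RR_cong) (use assms that in auto)
  moreover have "0 < N" using assms by auto
  ultimately show ?thesis unfolding Vc_def using assms by (auto intro!: sum.cong)
qed

lemma cont_glue:
  fixes f :: "real ^ 'n::finite \<Rightarrow> real"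
  assumes "open H" "closed C" "C \<subseteq> H" "continuous_on H F"
    "\<And>x. x \<notin> C \<Longrightarrow> f x = 0" "\<And>x. x \<in> H \<Longrightarrow> f x = F x"
  shows "continuous_on UNIV f"
proof (rule continuous_at_imp_continuous_on, intro ballI)
  fix x :: "real^'n"
  show "isCont f x"
  proof (cases "x \<in> H")
    case True
    have "isCont F x" using assms(1,4) True continuous_on_eq_continuous_at by blast
    moreover have "eventually (\<lambda>y. f y = F y) (nhds x)"
      by (rule eventually_nhds_in_open[OF assms(1) True, THEN eventually_mono]) (use assms(6) in auto)
    ultimately show ?thesis using isCont_cong by blast
  next
    case False
    then have "x \<in> -C" using assms(3) by auto
    have "isCont (\<lambda>x. 0::real) x" by simp
    moreover have "eventually (\<lambda>y. f y = 0) (nhds x)"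
      by (rule eventually_nhds_in_open[of "-C", OF _ \<open>x \<in> -C\<close>, THEN eventually_mono]) (use assms(2,5) in auto)
    ultimately show ?thesis using isCont_cong[of f "\<lambda>_. 0::real" x] by auto
  qed
qed

lemma int_cs:
  fixes f :: "real ^ 'n::finite \<Rightarrow> real"
  assumes "continuous_on UNIV f" "compact C" "\<And>x. x \<notin> C \<Longrightarrow> f x = 0"
  shows "f integrable_on UNIV"
proof -
  obtain a where a: "C \<subseteq> cbox (-a) a"
    using bounded_subset_cbox_symmetric[OF compact_imp_bounded[OF assms(2)]] by blast
  have "f integrable_on cbox (-a) a" by (rule integrable_continuous, rule continuous_on_subset[OF assms(1)]) auto
  then show ?thesis by (rule integrable_on_superset) (use a assms(3) in auto)
qed

lemma int_restrict:
  fixes f :: "real ^ 'n::finite \<Rightarrow> real"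
  assumes "f integrable_on UNIV" "\<And>x. x \<notin> H \<Longrightarrow> f x = 0"
  shows "(f has_integral integral UNIV f) H"
proof -
  have "(\<lambda>x. if x \<in> H then f x else 0) = f" using assms(2) by auto
  then show ?thesis using has_integral_restrict_UNIV[of H f] assms(1) by (metis integrable_integral)
qed

lemma vn_diff: "(\<lambda>y::real^'n::finite. y $ i) differentiable (at x)"
  by (rule bounded_linear_imp_differentiable[OF bounded_linear_vec_nth])

lemma csum: "(\<Sum>j=1..m. (coord x j)^2) = RR (\<lambda>p. x $ en p) m"
  unfolding RR_def coord_en by (induct m) auto

theorem corollary2p2:
  fixes u :: "real ^ ('n::{finite,linorder}) \<Rightarrow> real" and k :: nat
  assumes "1 \<le> k" and "k \<le> CARD('n)"
    and "u \<in> C0_infty half_space"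
  shows "integral half_space (\<lambda>x. grad_sq u x)
    \<ge> integral half_space (\<lambda>x.
         ((real k)^2 / 4 * (1 / (\<Sum>j=1..k. (coord x j)^2))
          + (\<Sum>m=k+1..CARD('n). 1/4 * (1 / (\<Sum>j=1..m. (coord x j)^2)))) * (u x)^2)"
proof -
  define N where "N = CARD('n)"
  have k: "1 \<le> k" "k \<le> N" using assms N_def by auto
  define X where "X x = (\<lambda>p. x $ (en p :: 'n))" for x :: "real^'n::{finite,linorder}"
  define H where "H = {x::real^'n::{finite,linorder}. 0 < x $ en 0}"
  have HH: "half_space = H" unfolding half_space_def H_def coord_en by simp
  have oH: "open H" unfolding H_def by (rule open_Collect_less) (auto intro!: continuous_intros)
  define C where "C = closure {x. u x \<noteq> 0}"
  have sm: "smooth u" and cC: "compact C" and CH: "C \<subseteq> H"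
    using assms(3) unfolding C0_infty_def C_def HH by auto
  have clC: "closed C" unfolding C_def by simp
  have du: "u differentiable (at x)" for x
  proof -
    have "pderivs [] u differentiable (at x)" using sm unfolding smooth_def by blast
    then show ?thesis by simp
  qed
  have dpu: "partial i u differentiable (at x)" for i x
  proof -
    have "pderivs [i] u differentiable (at x)" using sm unfolding smooth_def by blast
    then show ?thesis by simp
  qed
  have cpu: "continuous_on S (partial i u)" for i S by (rule diff_cont[OF dpu])
  have cu: "continuous_on S u" for S by (rule diff_cont[OF du])
  have u0: "u x = 0" if "x \<notin> C" for x
  proof (rule ccontr)
    assume "u x \<noteq> 0"
    then have "x \<in> {x. u x \<noteq> 0}" by simp
    then have "x \<in> C" unfolding C_def using closure_subset by (rule subsetD[rotated])
    then show False using that by simp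
  qed
  have pu0: "partial i u x = 0" if "x \<notin> C" for i x
    by (rule partial_zero[of "-C"]) (use that clC u0 in auto)
  have x0: "X x 0 > 0" if "x \<in> H" for x using that unfolding H_def X_def by simp
  have pos: "RR (X x) m > 0" if "x \<in> H" "0 < m" for x m using RR_pos[of "X x" m, OF x0[OF that(1)]] that by simp
  have rne: "(\<Sum>p<m. (x $ en p)^2) \<noteq> 0" if "x \<in> H" "0 < m" for x m
    using pos[OF that] unfolding RR_def X_def by simp
  have x0ne: "x $ en 0 \<noteq> 0" if "x \<in> H" for x using x0[OF that] unfolding X_def by simp

  have Vdiff: "(\<lambda>y. Vc k N (X y) q) differentiable (at x)" if "x \<in> H" for q x
    unfolding Vc_def RR_def X_def
    using that k by (auto intro!: derivative_intros vn_diff simp: rne x0ne)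
  have Vpart: "partial (en q) (\<lambda>y. Vc k N (X y) q) x = Dc k N (X x) q" if "x \<in> H" "q < N" for q x
  proof (rule partial_line[OF Vdiff[OF that(1)]])
    have "(\<lambda>t. Vc k N (X (x + t *\<^sub>R axis (en q) 1)) q) = (\<lambda>t. Vc k N (\<lambda>p. X x p + t * of_bool (p = q)) q)"
    proof
      fix t
      show "Vc k N (X (x + t *\<^sub>R axis (en q) 1)) q = Vc k N (\<lambda>p. X x p + t * of_bool (p = q)) q"
        by (rule Vc_cong) (use that k en_inj[where 'n='n] in \<open>auto simp: X_def axis_def N_def\<close>)
    qed
    then show "((\<lambda>t. Vc k N (X (x + t *\<^sub>R axis (en q) 1)) q) has_real_derivative Dc k N (X x) q) (at 0)"
      using deriv_Vc[of "X x", OF x0[OF that(1)] k that(2)] by simp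
  qed
  define g where "g q y = Vc k N (X y) q * (u y * u y)" for q y
  have duu: "(\<lambda>y. u y * u y) differentiable (at x)" for x using du by simp
  have gH: "partial (en q) (g q) x = Dc k N (X x) q * (u x * u x)
      + Vc k N (X x) q * (partial (en q) u x * u x + u x * partial (en q) u x)" if "x \<in> H" "q < N" for q x
    unfolding g_def[abs_def] partial_mult[OF Vdiff[OF that(1)] duu] partial_mult[OF du du] Vpart[OF that] ..
  have gC: "partial (en q) (g q) x = 0 \<and> g q differentiable (at x)" if "x \<notin> C" for q x
    using partial_zero[of "-C" x "g q"] that clC u0 unfolding g_def by auto
  have gdiff: "g q differentiable (at x)" for q x
  proof (cases "x \<in> H")
    case True then show ?thesis unfolding g_def[abs_def] using Vdiff duu by simp
  next
    case False then show ?thesis using gC CH by auto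
  qed
  have Vcont: "continuous_on H (\<lambda>x. Vc k N (X x) q)" for q
    unfolding Vc_def RR_def X_def
    apply (intro continuous_intros) using k by (auto simp: rne x0ne)
  have Dcont: "continuous_on H (\<lambda>x. Dc k N (X x) q)" for q
    unfolding Dc_def RR_def X_def
    apply (intro continuous_intros) using k by (auto simp: rne x0ne)
  have gcont: "continuous_on UNIV (partial (en q) (g q))" if "q < N" for q
  proof (rule cont_glue[OF oH clC CH])
    show "continuous_on H (\<lambda>x. Dc k N (X x) q * (u x * u x)
      + Vc k N (X x) q * (partial (en q) u x * u x + u x * partial (en q) u x))"
      by (intro continuous_intros Vcont Dcont cu cpu)
  qed (use gC gH that in auto)
  have gint: "(partial (en q) (g q) has_integral 0) UNIV" if "q < N" for q
    by (rule ibp[OF gdiff gcont[OF that] cC]) (use u0 g_def in auto)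
  define P where "P x = (\<Sum>q<N. partial (en q) (g q) x)" for x
  have "(P has_integral (\<Sum>q<N. 0)) UNIV" unfolding P_def
    by (rule has_integral_sum) (use gint in auto)
  then have Pint: "(P has_integral 0) UNIV" by simp
  have P0: "P x = 0" if "x \<notin> H" for x
  proof -
    have "x \<notin> C" using that CH by auto
    then show ?thesis unfolding P_def using gC by simp
  qed
  have PH: "(P has_integral 0) H"
  proof -
    have i0: "integral UNIV P = 0" using Pint by (rule integral_unique)
    have "(P has_integral integral UNIV P) H"
      by (rule int_restrict) (use Pint P0 has_integral_integrable in blast)+
    then show ?thesis unfolding i0 .
  qed
  define F where "F x = ((real k)^2 / 4 * (1 / (\<Sum>j=1..k. (coord x j)^2))
          + (\<Sum>m=k+1..CARD('n). 1/4 * (1 / (\<Sum>j=1..m. (coord x j)^2)))) * (u x)^2" for x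
  have F: "F x = ((real k)^2 / 4 * (1 / RR (X x) k) + (\<Sum>m\<in>{k+1..N}. 1/4 * (1 / RR (X x) m))) * (u x)^2" for x
    unfolding F_def csum X_def N_def ..
  have G: "grad_sq u x = (\<Sum>q<N. (partial (en q) u x)^2)" for x
    unfolding grad_sq_def sum_en N_def ..
  have Fcont: "continuous_on UNIV F"
  proof (rule cont_glue[OF oH clC CH])
    show "continuous_on H (\<lambda>x. ((real k)^2 / 4 * (1 / RR (X x) k) + (\<Sum>m\<in>{k+1..N}. 1/4 * (1 / RR (X x) m))) * (u x)^2)"
      unfolding RR_def X_def using k by (auto intro!: continuous_intros cu simp: rne)
  qed (use F u0 in auto)
  have Gcont: "continuous_on UNIV (grad_sq u)"
    unfolding G[abs_def] by (intro continuous_intros cpu)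
  have FH: "(F has_integral integral UNIV F) H"
    by (rule int_restrict[OF int_cs[OF Fcont cC]]) (use F u0 CH in auto)
  have GH: "(grad_sq u has_integral integral UNIV (grad_sq u)) H"
  proof (rule int_restrict[OF int_cs[OF Gcont cC]])
    fix x assume "x \<notin> C" then show "grad_sq u x = 0" using pu0 by (simp add: grad_sq_def)
  next
    fix x assume "x \<notin> H" then have "x \<notin> C" using CH by auto
    then show "grad_sq u x = 0" using pu0 by (simp add: grad_sq_def)
  qed
  have pw: "F x - P x \<le> grad_sq u x" if "x \<in> H" for x
  proof -
    have x0': "X x 0 > 0" using x0[OF that] .
    have W: "F x = (\<Sum>q<N. Dc k N (X x) q * (u x)^2) - (\<Sum>q<N. (Vc k N (X x) q)^2 * (u x)^2)"
      unfolding F weight_eq[of "X x", OF x0' k, symmetric] by (simp add: sum_distrib_right left_diff_distrib)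
    have PP: "P x = (\<Sum>q<N. Dc k N (X x) q * (u x)^2 + Vc k N (X x) q * (2 * partial (en q) u x * u x))"
      unfolding P_def by (rule sum.cong) (auto simp: gH[OF that] power2_eq_square algebra_simps)
    have "grad_sq u x - F x + P x = (\<Sum>q<N. (partial (en q) u x + Vc k N (X x) q * u x)^2)"
      unfolding G W PP sum_subtractf[symmetric] sum.distrib[symmetric]
      by (rule sum.cong) (auto simp: power2_eq_square algebra_simps)
    also have "\<dots> \<ge> 0" by (rule sum_nonneg) simp
    finally show ?thesis by simp
  qed
  have "integral H (\<lambda>x. F x - P x) \<le> integral H (grad_sq u)"
    by (rule integral_le) (use FH PH GH pw in \<open>auto intro!: integrable_diff simp: has_integral_integrable\<close>)
  moreover have "integral H (\<lambda>x. F x - P x) = integral H F"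
    using integral_diff[of F H P] FH PH by (simp add: has_integral_integrable integral_unique)
  ultimately show ?thesis unfolding HH F_def by simp
qed

end
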